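(* For every $\theta\in\mathbb{R}$, integer $m\ge1$, $x=x_1\cdots x_m\in\{0,1\}^m$ and one-qubit state $|\psi\rangle$, $$\langle x|_{1\ldots m}\,(M_{m,\theta}^\dagger)_{1\ldots m}\prod_{i=1}^m\mathrm{CNOT}_{i,m+1}\,|+\rangle^{\otimes m}\otimes|\psi\rangle=\langle x|_{1\ldots m}\prod_{i=1}^m(A_\theta^\dagger)_i\,\mathrm{CNOT}_{i,m+1}\,|+\rangle^{\otimes m}\otimes|\psi\rangle .$$
   Context: $X$ is the Pauli-$X$ matrix, $|+\rangle=(|0\rangle+|1\rangle)/\sqrt2$, $\mathrm{CNOT}_{i,j}$ has control $i$ and target $j$, and $\langle x|_{1\ldots m}$ is the partial inner product on qubits $1,\dots,m$. $A_\theta=|0\rangle\langle0|+e^{-i\theta X}|1\rangle\langle1|$. $M_{m,\theta}$ is the (non-unitary) $m$-qubit operator defined on basis states by $M_{m,\theta}|x_1\cdots x_m\rangle=\bigotimes_{j=1}^m e^{-i\theta x_{j-1}X}|x_j\rangle$, with indices mod $m$ (so $x_0=x_m$). *)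

theory Defs
  imports Complex_Main
begin

text \<open>An n-qubit computational basis state |b_1 ... b_n> is a list b of
  booleans of length n (qubit i, 1-indexed, is b ! (i-1); False = 0, True = 1).
  An n-qubit vector is a function from such lists to complex amplitudes, and an
  n-qubit operator is given by its matrix entries U y x = <y|U|x>.\<close>

definition basis :: "nat \<Rightarrow> bool list set" where
  "basis n = {xs. length xs = n}"

type_synonym qvec = "bool list \<Rightarrow> complex"
type_synonym qop = "bool list \<Rightarrow> bool list \<Rightarrow> complex"

definition apply_op :: "nat \<Rightarrow> qop \<Rightarrow> qvec \<Rightarrow> qvec" where
  "apply_op n U v = (\<lambda>y. \<Sum>x\<in>basis n. U y x * v x)"

definition dagger :: "('a \<Rightarrow> 'a \<Rightarrow> complex) \<Rightarrow> 'a \<Rightarrow> 'a \<Rightarrow> complex" where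
  "dagger U = (\<lambda>y x. cnj (U x y))"

definition kdelta :: "'a \<Rightarrow> 'a \<Rightarrow> complex" where
  "kdelta a b = (if a = b then 1 else 0)"

text \<open>Pauli X and exp(-i theta X) = cos theta I - i sin theta X (written out).\<close>
definition pauliX :: "bool \<Rightarrow> bool \<Rightarrow> complex" where
  "pauliX a b = (if a \<noteq> b then 1 else 0)"

definition expX :: "real \<Rightarrow> bool \<Rightarrow> bool \<Rightarrow> complex" where
  "expX \<theta> a b = complex_of_real (cos \<theta>) * kdelta a b - \<i> * complex_of_real (sin \<theta>) * pauliX a b"

text \<open>A_theta = |0><0| + exp(-i theta X)|1><1|.\<close>
definition A_op :: "real \<Rightarrow> bool \<Rightarrow> bool \<Rightarrow> complex" where
  "A_op \<theta> a b = (if b then expX \<theta> a True else kdelta a False)"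

definition gate1 :: "nat \<Rightarrow> nat \<Rightarrow> (bool \<Rightarrow> bool \<Rightarrow> complex) \<Rightarrow> qop" where
  "gate1 n i G = (\<lambda>y x. G (y ! (i-1)) (x ! (i-1)) *
      (\<Prod>j\<in>{..<n} - {i-1}. kdelta (y ! j) (x ! j)))"

definition CNOT :: "nat \<Rightarrow> nat \<Rightarrow> qop" where
  "CNOT c t = (\<lambda>y x. kdelta y (x[t-1 := (x ! (t-1) \<noteq> x ! (c-1))]))"

text \<open>M_{m,theta} |x_1...x_m> = tensor_j exp(-i theta x_{j-1} X)|x_j>, indices mod m.
  (0-indexed: qubit j is controlled by qubit (j-1) mod m.)\<close>
definition M_op :: "nat \<Rightarrow> real \<Rightarrow> qop" where
  "M_op m \<theta> = (\<lambda>y x. \<Prod>j<m.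
      expX (if x ! ((j + m - 1) mod m) then \<theta> else 0) (y ! j) (x ! j))"

definition on_first :: "nat \<Rightarrow> qop \<Rightarrow> qop" where
  "on_first m U = (\<lambda>y x. U (take m y) (take m x) * kdelta (y ! m) (x ! m))"

text \<open>|+>^{tensor m} tensor |psi>.\<close>
definition plus_psi :: "nat \<Rightarrow> (bool \<Rightarrow> complex) \<Rightarrow> qvec" where
  "plus_psi m \<psi> = (\<lambda>x. complex_of_real ((1 / sqrt 2) ^ m) * \<psi> (x ! m))"

definition partial_bra :: "bool list \<Rightarrow> qvec \<Rightarrow> bool \<Rightarrow> complex" where
  "partial_bra x v = (\<lambda>b. v (x @ [b]))"

text \<open>Ordered product prod_{i=1}^m F_i applied to v, i.e. F_1 (F_2 (... (F_m v))).\<close>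
definition prod_apply :: "nat \<Rightarrow> (nat \<Rightarrow> qvec \<Rightarrow> qvec) \<Rightarrow> qvec \<Rightarrow> qvec" where
  "prod_apply m F v = foldr F [1..<m+1] v"

end

theory Submission
  imports Defs
begin

lemma finite_basis[simp]: "finite (basis n)"
proof -
  have "basis n = {xs. set xs \<subseteq> (UNIV::bool set) \<and> length xs = n}" by (auto simp: basis_def)
  thus ?thesis using finite_lists_length_eq[of "UNIV::bool set" n] by simp
qed

lemma basis_cons: "basis (Suc n) = (\<lambda>(a,w). a # w) ` (UNIV \<times> basis n)"
  by (auto simp: basis_def length_Suc_conv image_iff)

lemma basis_snoc: "basis (Suc n) = (\<lambda>(a,w). w @ [a]) ` (UNIV \<times> basis n)"
proof (auto simp: basis_def image_iff)
  fix z :: "bool list" assume "length z = Suc n"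
  then show "\<exists>a w. length w = n \<and> z = w @ [a]"
    by (metis append_butlast_last_id diff_Suc_1 length_butlast list.size(3) nat.distinct(1))
qed

lemma sum_basis_cons: "(\<Sum>z\<in>basis (Suc n). h z) = (\<Sum>a\<in>UNIV. \<Sum>w\<in>basis n. h (a # w))"
proof -
  have "inj_on (\<lambda>(a,w). a # w) (UNIV \<times> basis n)" by (auto simp: inj_on_def)
  then have "(\<Sum>z\<in>basis (Suc n). h z) = (\<Sum>p\<in>UNIV \<times> basis n. h ((\<lambda>(a,w). a # w) p))"
    unfolding basis_cons by (rule sum.reindex[unfolded comp_def])
  also have "\<dots> = (\<Sum>a\<in>UNIV. \<Sum>w\<in>basis n. h (a # w))"
    by (simp add: sum.cartesian_product prod.case_distrib)
  finally show ?thesis .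
qed

lemma sum_basis_snoc: "(\<Sum>z\<in>basis (Suc n). h z) = (\<Sum>a\<in>UNIV. \<Sum>w\<in>basis n. h (w @ [a]))"
proof -
  have "inj_on (\<lambda>(a,w). w @ [a]) (UNIV \<times> basis n)" by (auto simp: inj_on_def)
  then have "(\<Sum>z\<in>basis (Suc n). h z) = (\<Sum>p\<in>UNIV \<times> basis n. h ((\<lambda>(a,w). w @ [a]) p))"
    unfolding basis_snoc by (rule sum.reindex[unfolded comp_def])
  also have "\<dots> = (\<Sum>a\<in>UNIV. \<Sum>w\<in>basis n. h (w @ [a]))"
    by (simp add: sum.cartesian_product prod.case_distrib)
  finally show ?thesis .
qed

fun par :: "bool list \<Rightarrow> bool" where
  "par [] = False" | "par (a # w) = (a \<noteq> par w)"

lemma cnot_apply: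
  assumes "length y = Suc m" "i - 1 < m"
  shows "apply_op (Suc m) (CNOT i (Suc m)) v y = v (y[m := (y ! m \<noteq> y ! (i - 1))])"
proof -
  let ?f = "\<lambda>x::bool list. x[m := (x ! m \<noteq> x ! (i - 1))]"
  have eq: "kdelta y (?f x) * v x = (if x = ?f y then v x else 0)" if "x \<in> basis (Suc m)" for x
  proof -
    have inv: "?f (?f z) = z" if "length z = Suc m" for z
    proof -
      have "((z ! m = (\<not> z ! (i - 1))) = (\<not> z ! (i - 1))) = z ! m" by auto
      then show ?thesis using that assms by simp
    qed
    have "(y = ?f x) = (x = ?f y)" using that assms inv[of x] inv[of y]
      by (auto simp: basis_def)
    thus ?thesis by (auto simp: kdelta_def)
  qed
  have "apply_op (Suc m) (CNOT i (Suc m)) v y = (\<Sum>x\<in>basis (Suc m). if x = ?f y then v x else 0)"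
    unfolding apply_op_def CNOT_def using eq by (auto intro: sum.cong)
  also have "\<dots> = v (?f y)"
  proof -
    have "?f y \<in> basis (Suc m)" using assms by (simp add: basis_def)
    then show ?thesis by (simp only: sum.delta[OF finite_basis] if_True)
  qed
  finally show ?thesis .
qed

lemma prod_kdelta: "finite J \<Longrightarrow> (\<Prod>j\<in>J. kdelta (f j) (g j)) = (if \<forall>j\<in>J. f j = g j then 1 else 0)"
  by (induction J rule: finite_induct) (auto simp: kdelta_def)

lemma gate1_apply:
  assumes "length y = n" "i - 1 < n"
  shows "apply_op n (gate1 n i G) v y = (\<Sum>a\<in>UNIV. G (y ! (i-1)) a * v (y[i-1 := a]))"
proof -
  define k where "k = i - 1"
  let ?k = k
  have ga: "gate1 n i G = (\<lambda>y x. G (y ! k) (x ! k) * (\<Prod>j\<in>{..<n} - {k}. kdelta (y ! j) (x ! j)))"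
    unfolding gate1_def k_def ..
  note assms = assms[folded k_def]
  have eq: "gate1 n i G y x * v x = (if x \<in> range (\<lambda>a. y[?k := a]) then G (y ! ?k) (x ! ?k) * v x else 0)"
    if "x \<in> basis n" for x
  proof -
    have "(\<forall>j\<in>{..<n} - {?k}. y ! j = x ! j) = (x \<in> range (\<lambda>a. y[?k := a]))"
      using that assms
      apply (auto simp: basis_def list_eq_iff_nth_eq nth_list_update image_iff)
      done
    thus ?thesis unfolding ga by (simp add: prod_kdelta)
  qed
  have "apply_op n (gate1 n i G) v y = (\<Sum>x\<in>basis n. if x \<in> range (\<lambda>a. y[?k := a]) then G (y ! ?k) (x ! ?k) * v x else 0)"
    unfolding apply_op_def using eq by (auto intro: sum.cong)
  also have "\<dots> = (\<Sum>x\<in>basis n \<inter> range (\<lambda>a. y[?k := a]). G (y ! ?k) (x ! ?k) * v x)"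
    by (simp add: sum.inter_restrict)
  also have "basis n \<inter> range (\<lambda>a. y[?k := a]) = range (\<lambda>a. y[?k := a])"
    using assms by (auto simp: basis_def)
  also have "(\<Sum>x\<in>range (\<lambda>a. y[?k := a]). G (y ! ?k) (x ! ?k) * v x) = (\<Sum>a\<in>UNIV. G (y ! ?k) a * v (y[?k := a]))"
  proof -
    have "inj (\<lambda>a. y[?k := a])" using assms by (auto simp: inj_on_def list_eq_iff_nth_eq nth_list_update)
    thus ?thesis using assms by (simp add: sum.reindex)
  qed
  finally show ?thesis unfolding k_def .
qed

definition Ssum :: "nat \<Rightarrow> (nat \<Rightarrow> bool \<Rightarrow> complex) \<Rightarrow> (bool \<Rightarrow> complex) \<Rightarrow> bool \<Rightarrow> complex" where
  "Ssum n f \<phi> b = (\<Sum>w\<in>basis n. (\<Prod>j<n. f j (w ! j)) * \<phi> (b \<noteq> par w))"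

lemma basis_0: "basis 0 = {[]}" by (auto simp: basis_def)

lemma S_0: "Ssum 0 f \<phi> b = \<phi> b" by (simp add: Ssum_def basis_0)

lemma S_Suc: "Ssum (Suc n) f \<phi> b = (\<Sum>a\<in>UNIV. f 0 a * Ssum n (\<lambda>j. f (Suc j)) \<phi> (b \<noteq> a))"
proof -
  have key: "\<phi> (b \<noteq> par (a # w)) = \<phi> ((b \<noteq> a) \<noteq> par w)" for a w
    by (cases b; cases a; simp)
  show ?thesis
    unfolding Ssum_def sum_basis_cons prod.lessThan_Suc_shift
    by (simp only: key nth_Cons_0 nth_Cons_Suc sum_distrib_left mult.assoc)
qed

lemma S_pm: "Ssum n f \<phi> False + Ssum n f \<phi> True = (\<Prod>j<n. f j False + f j True) * (\<phi> False + \<phi> True)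
  \<and> Ssum n f \<phi> False - Ssum n f \<phi> True = (\<Prod>j<n. f j False - f j True) * (\<phi> False - \<phi> True)"
proof (induction n arbitrary: f)
  case 0 then show ?case by (simp add: S_0)
next
  case (Suc n)
  let ?g = "\<lambda>j. f (Suc j)"
  from Suc[of ?g] have A: "Ssum n ?g \<phi> False + Ssum n ?g \<phi> True = (\<Prod>j<n. ?g j False + ?g j True) * (\<phi> False + \<phi> True)"
    and B: "Ssum n ?g \<phi> False - Ssum n ?g \<phi> True = (\<Prod>j<n. ?g j False - ?g j True) * (\<phi> False - \<phi> True)" by auto
  have C: "Ssum (Suc n) f \<phi> False + Ssum (Suc n) f \<phi> True = (f 0 False + f 0 True) * (Ssum n ?g \<phi> False + Ssum n ?g \<phi> True)"
    by (simp add: S_Suc UNIV_bool algebra_simps)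
  have D: "Ssum (Suc n) f \<phi> False - Ssum (Suc n) f \<phi> True = (f 0 False - f 0 True) * (Ssum n ?g \<phi> False - Ssum n ?g \<phi> True)"
    by (simp add: S_Suc UNIV_bool algebra_simps)
  show ?case unfolding C D A B prod.lessThan_Suc_shift by (simp add: mult.assoc)
qed

lemma pm_eq: assumes h1: "(a::complex) + b = c + d" and h2: "a - b = c - d" shows "a = c \<and> b = d"
proof -
  have "a = ((a + b) + (a - b)) / 2" by simp
  also have "\<dots> = ((c + d) + (c - d)) / 2" using h1 h2 by simp
  also have "\<dots> = c" by simp
  finally have ac: "a = c" .
  show ?thesis using ac h1 by simp
qed

lemma S_eq:
  assumes "(\<Prod>j<n. f j False + f j True) = (\<Prod>j<n. g j False + g j True)"
    and "(\<Prod>j<n. f j False - f j True) = (\<Prod>j<n. g j False - g j True)"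
  shows "Ssum n f \<phi> b = Ssum n g \<phi> b"
proof -
  have 1: "Ssum n f \<phi> False + Ssum n f \<phi> True = Ssum n g \<phi> False + Ssum n g \<phi> True"
    using S_pm[of n f \<phi>] S_pm[of n g \<phi>] assms by simp
  have 2: "Ssum n f \<phi> False - Ssum n f \<phi> True = Ssum n g \<phi> False - Ssum n g \<phi> True"
    using S_pm[of n f \<phi>] S_pm[of n g \<phi>] assms by simp
  from 1 2 have "Ssum n f \<phi> False = Ssum n g \<phi> False \<and> Ssum n f \<phi> True = Ssum n g \<phi> True"
    using pm_eq by blast
  thus ?thesis by (cases b) auto
qed

lemma Ssum_cong: "(\<And>j a. j < n \<Longrightarrow> f j a = g j a) \<Longrightarrow> Ssum n f \<phi> b = Ssum n g \<phi> b"
  unfolding Ssum_def by (auto intro!: sum.cong prod.cong)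

lemma lhs_state:
  assumes "k \<le> m" "length y = Suc m"
  shows "foldr (\<lambda>i v. apply_op (m+1) (CNOT i (m+1)) v) [Suc k..<m+1] (plus_psi m \<psi>) y
     = complex_of_real ((1 / sqrt 2) ^ m) * \<psi> (y ! m \<noteq> par (drop k (take m y)))"
  using assms
proof (induction "m - k" arbitrary: k y)
  case 0
  then have "k = m" by simp
  then show ?case by (simp add: plus_psi_def)
next
  case (Suc d)
  then have km: "k < m" by simp
  let ?y = "y[m := (y ! m \<noteq> y ! k)]"
  have l: "length ?y = Suc m" using Suc by simp
  have IH: "foldr (\<lambda>i v. apply_op (m+1) (CNOT i (m+1)) v) [Suc (Suc k)..<m+1] (plus_psi m \<psi>) ?y
     = complex_of_real ((1 / sqrt 2) ^ m) * \<psi> (?y ! m \<noteq> par (drop (Suc k) (take m ?y)))"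
    using Suc(1)[of "Suc k" ?y] Suc(2) km l by simp
  have up: "[Suc k..<m+1] = Suc k # [Suc (Suc k)..<m+1]" using km by (simp add: upt_conv_Cons)
  have dr: "drop k (take m y) = y ! k # drop (Suc k) (take m y)"
    using km Suc(4) by (metis Cons_nth_drop_Suc length_take min.absorb4 lessI less_Suc_eq nth_take)
  have tk: "take m ?y = take m y" by simp
  show ?case
    unfolding up foldr_Cons o_def
    using cnot_apply[of y m "Suc k"] Suc(4) km IH tk dr
    apply (simp del: upt_Suc)
    by (cases "y ! m"; cases "y ! k"; simp)
qed

lemma rhs_state:
  assumes "k \<le> m" "length y = Suc m"
  shows "foldr (\<lambda>i v. apply_op (m+1) (gate1 (m+1) i G) (apply_op (m+1) (CNOT i (m+1)) v)) [Suc k..<m+1] (plus_psi m \<psi>) y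
     = complex_of_real ((1 / sqrt 2) ^ m) * Ssum (m - k) (\<lambda>j a. G (y ! (k + j)) a) \<psi> (y ! m)"
  using assms
proof (induction "m - k" arbitrary: k y)
  case 0
  then have "k = m" by simp
  then show ?case by (simp add: plus_psi_def S_0)
next
  case (Suc d)
  then have km: "k < m" by simp
  let ?F = "\<lambda>i v. apply_op (m+1) (gate1 (m+1) i G) (apply_op (m+1) (CNOT i (m+1)) v)"
  let ?R = "foldr ?F [Suc (Suc k)..<m+1] (plus_psi m \<psi>)"
  have IH: "?R z = complex_of_real ((1 / sqrt 2) ^ m) * Ssum (m - Suc k) (\<lambda>j a. G (z ! (Suc k + j)) a) \<psi> (z ! m)"
    if "length z = Suc m" for z
    using Suc(1)[of "Suc k" z] Suc(2) km that by simp
  have up: "[Suc k..<m+1] = Suc k # [Suc (Suc k)..<m+1]" using km by (simp add: upt_conv_Cons)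
  have step: "?F (Suc k) ?R y = (\<Sum>a\<in>UNIV. G (y ! k) a * (complex_of_real ((1 / sqrt 2) ^ m) *
      Ssum (m - Suc k) (\<lambda>j a. G (y ! (k + Suc j)) a) \<psi> (y ! m \<noteq> a)))"
  proof -
    have "?F (Suc k) ?R y = (\<Sum>a\<in>UNIV. G (y ! k) a * apply_op (Suc m) (CNOT (Suc k) (Suc m)) ?R (y[k := a]))"
      using gate1_apply[of y "Suc m" "Suc k" G] Suc(4) km by simp
    also have "\<dots> = (\<Sum>a\<in>UNIV. G (y ! k) a * ?R (y[k := a, m := (y ! m \<noteq> a)]))"
      using cnot_apply[of _ m "Suc k"] Suc(4) km by (simp add: nth_list_update)
    also have "\<dots> = (\<Sum>a\<in>UNIV. G (y ! k) a * (complex_of_real ((1 / sqrt 2) ^ m) *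
      Ssum (m - Suc k) (\<lambda>j a. G (y ! (k + Suc j)) a) \<psi> (y ! m \<noteq> a)))"
    proof (rule sum.cong[OF refl])
      fix a
      have "Ssum (m - Suc k) (\<lambda>j a'. G (y[k := a, m := (y ! m \<noteq> a)] ! (Suc k + j)) a') \<psi> (y ! m \<noteq> a)
         = Ssum (m - Suc k) (\<lambda>j a. G (y ! (k + Suc j)) a) \<psi> (y ! m \<noteq> a)"
        by (rule Ssum_cong) (simp add: nth_list_update)
      then show "G (y ! k) a * ?R (y[k := a, m := (y ! m \<noteq> a)]) = G (y ! k) a * (complex_of_real ((1 / sqrt 2) ^ m) *
      Ssum (m - Suc k) (\<lambda>j a. G (y ! (k + Suc j)) a) \<psi> (y ! m \<noteq> a))"
        using IH[of "y[k := a, m := (y ! m \<noteq> a)]"] Suc(4) km by simp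
    qed
    finally show ?thesis .
  qed
  have md: "m - k = Suc (m - Suc k)" using km by simp
  show ?case
    unfolding up foldr_Cons o_def step md S_Suc
    by (simp add: sum_distrib_left algebra_simps)
qed

definition ee :: "real \<Rightarrow> complex" where
  "ee t = complex_of_real (cos t) + \<i> * complex_of_real (sin t)"
definition ee' :: "real \<Rightarrow> complex" where
  "ee' t = complex_of_real (cos t) - \<i> * complex_of_real (sin t)"

lemma expX_plus: "cnj (expX t False c) + cnj (expX t True c) = ee t"
  by (cases c) (simp_all add: expX_def kdelta_def pauliX_def ee_def)

lemma expX_minus: "cnj (expX t False c) - cnj (expX t True c) = (if c then -1 else 1) * ee' t"
  by (cases c) (simp_all add: expX_def kdelta_def pauliX_def ee'_def)

lemma A_plus: "cnj (A_op t False c) + cnj (A_op t True c) = ee (if c then t else 0)"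
  by (cases c) (simp_all add: A_op_def expX_def kdelta_def pauliX_def ee_def)

lemma A_minus: "cnj (A_op t False c) - cnj (A_op t True c) = (if c then -1 else 1) * ee' (if c then t else 0)"
  by (cases c) (simp_all add: A_op_def expX_def kdelta_def pauliX_def ee'_def)

lemma cyc: fixes m :: nat assumes "m \<ge> 1" shows "(\<Prod>j<m. h ((j + m - 1) mod m)) = (\<Prod>j<m. (h j :: complex))"
proof -
  obtain n where Suc: "m = Suc n" using assms by (cases m) auto
  have "(\<Prod>j<Suc n. h ((j + Suc n - 1) mod Suc n)) = h n * (\<Prod>j<n. h ((Suc j + Suc n - 1) mod Suc n))"
    by (simp add: prod.lessThan_Suc_shift del: prod.lessThan_Suc)
  also have "(\<Prod>j<n. h ((Suc j + Suc n - 1) mod Suc n)) = (\<Prod>j<n. h j)"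
  proof (rule prod.cong[OF refl])
    fix j assume "j \<in> {..<n}"
    then have "j < Suc n" by simp
    have "Suc j + Suc n - 1 = j + Suc n" by simp
    then have "(Suc j + Suc n - 1) mod Suc n = j mod Suc n" by (simp only: mod_add_self2)
    with \<open>j < Suc n\<close> show "h ((Suc j + Suc n - 1) mod Suc n) = h j" by simp
  qed
  finally show ?thesis using Suc by (simp add: mult.commute)
qed

theorem lemma4p4:
  fixes \<theta> :: real and m :: nat and x :: "bool list" and \<psi> :: "bool \<Rightarrow> complex"
  assumes "m \<ge> 1"
    and "length x = m"
    and "(cmod (\<psi> False))\<^sup>2 + (cmod (\<psi> True))\<^sup>2 = 1"
  shows "partial_bra x
           (apply_op (m+1) (on_first m (dagger (M_op m \<theta>)))
             (prod_apply m (\<lambda>i v. apply_op (m+1) (CNOT i (m+1)) v) (plus_psi m \<psi>)))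
       = partial_bra x
           (prod_apply m (\<lambda>i v. apply_op (m+1) (gate1 (m+1) i (dagger (A_op \<theta>)))
                                   (apply_op (m+1) (CNOT i (m+1)) v)) (plus_psi m \<psi>))"
proof
  fix b
  let ?c = "complex_of_real ((1 / sqrt 2) ^ m)"
  let ?W = "prod_apply m (\<lambda>i v. apply_op (m+1) (CNOT i (m+1)) v) (plus_psi m \<psi>)"
  define f where "f = (\<lambda>j a. cnj (expX (if x ! ((j + m - 1) mod m) then \<theta> else 0) a (x ! j)))"
  define g where "g = (\<lambda>j a. cnj (A_op \<theta> a (x ! j)))"
  have W: "?W (w @ [a]) = ?c * \<psi> (a \<noteq> par w)" if "w \<in> basis m" for w a
    using lhs_state[of 0 m "w @ [a]" \<psi>] that by (simp add: prod_apply_def basis_def nth_append del: upt_Suc)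
  have M: "dagger (M_op m \<theta>) x w = (\<Prod>j<m. f j (w ! j))" for w
    by (simp add: dagger_def M_op_def f_def)
  have "apply_op (m+1) (on_first m (dagger (M_op m \<theta>))) ?W (x @ [b])
     = (\<Sum>a\<in>UNIV. \<Sum>w\<in>basis m. dagger (M_op m \<theta>) x w * kdelta b a * ?W (w @ [a]))"
    unfolding apply_op_def on_first_def Suc_eq_plus1[symmetric] sum_basis_snoc
    by (intro sum.cong refl) (auto simp: basis_def nth_append assms(2))
  also have "\<dots> = (\<Sum>w\<in>basis m. \<Sum>a\<in>UNIV. dagger (M_op m \<theta>) x w * kdelta b a * ?W (w @ [a]))"
    by (rule sum.swap)
  also have "\<dots> = (\<Sum>w\<in>basis m. dagger (M_op m \<theta>) x w * ?W (w @ [b]))"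
    by (cases b) (simp_all add: kdelta_def UNIV_bool)
  also have "\<dots> = ?c * Ssum m f \<psi> b"
    unfolding Ssum_def sum_distrib_left using W M by (auto intro!: sum.cong)
  finally have L: "apply_op (m+1) (on_first m (dagger (M_op m \<theta>))) ?W (x @ [b]) = ?c * Ssum m f \<psi> b" .
  have R: "prod_apply m (\<lambda>i v. apply_op (m+1) (gate1 (m+1) i (dagger (A_op \<theta>)))
                                   (apply_op (m+1) (CNOT i (m+1)) v)) (plus_psi m \<psi>) (x @ [b])
     = ?c * Ssum m g \<psi> b"
  proof -
    have "Ssum m (\<lambda>j a. dagger (A_op \<theta>) ((x @ [b]) ! (0 + j)) a) \<psi> ((x @ [b]) ! m) = Ssum m g \<psi> b"
      using assms(2) by (auto simp: g_def dagger_def nth_append intro!: Ssum_cong)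
    then show ?thesis
      using rhs_state[of 0 m "x @ [b]" "dagger (A_op \<theta>)" \<psi>] assms(2) by (simp add: prod_apply_def del: upt_Suc)
  qed
  have S: "Ssum m f \<psi> b = Ssum m g \<psi> b"
  proof (rule S_eq)
    let ?h = "\<lambda>i. ee (if x ! i then \<theta> else 0)"
    show "(\<Prod>j<m. f j False + f j True) = (\<Prod>j<m. g j False + g j True)"
      using cyc[OF assms(1), of ?h] by (simp add: f_def g_def expX_plus A_plus)
    let ?h' = "\<lambda>i. ee' (if x ! i then \<theta> else 0)"
    show "(\<Prod>j<m. f j False - f j True) = (\<Prod>j<m. g j False - g j True)"
      using cyc[OF assms(1), of ?h'] by (simp add: f_def g_def expX_minus A_minus prod.distrib)
  qed
  show "partial_bra x (apply_op (m+1) (on_first m (dagger (M_op m \<theta>))) ?W) b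
     = partial_bra x (prod_apply m (\<lambda>i v. apply_op (m+1) (gate1 (m+1) i (dagger (A_op \<theta>)))
                                   (apply_op (m+1) (CNOT i (m+1)) v)) (plus_psi m \<psi>)) b"
    unfolding partial_bra_def using L R S by simp
qed

end
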